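(* For $\epsilon$ sufficiently small there is $C$ (independent of $\epsilon$ and $u$) such that every $u\in\mathcal H^a_0(0,1)$ satisfies $\|u\|_{L^2(0,1)}\le C\|a^2u_s\|_{L^2(0,1)}$.
   Context: Admissible radius $a:[0,1]\to[0,1]$: $a\in C^2[0,1)$, $\sup_{[0,1)}|aa'|<\infty$, $\sup_{[0,1)}|a^3a''|<\infty$, $\|a\|_\infty=1$, $a\ge a_0>0$ on $[0,1-\delta]$ for some $\delta>0$, and $|a(s)-\sqrt{1-s^2}|\le C\epsilon^2\sqrt{1-s^2}$ for $s>1-\delta$. $\mathcal H^a(0,1)=\{v\in L^2(0,1):a^2v_s\in L^2(0,1)\}$ (its elements are continuous on $[0,1)$), and $\mathcal H^a_0(0,1)=\{\gamma\in\mathcal H^a(0,1):\gamma(0)=0\}$. *)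

theory Defs
  imports "HOL-Analysis.Analysis"
begin

definition admissible_radius :: "real \<Rightarrow> real \<Rightarrow> real \<Rightarrow> real \<Rightarrow> (real \<Rightarrow> real) \<Rightarrow> bool" where
  "admissible_radius eps \<delta> a0 C0 a \<longleftrightarrow>
     \<delta> > 0 \<and> a0 > 0 \<and>
     (\<forall>s\<in>{0..1}. 0 \<le> a s \<and> a s \<le> 1) \<and>
     (\<exists>a' a''. (\<forall>s\<in>{0..<1}. (a has_real_derivative a' s) (at s within {0..<1}) \<and>
                             (a' has_real_derivative a'' s) (at s within {0..<1})) \<and>
               continuous_on {0..<1} a'' \<and>
               bounded ((\<lambda>s. a s * a' s) ` {0..<1}) \<and>
               bounded ((\<lambda>s. a s ^ 3 * a'' s) ` {0..<1})) \<and>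
     (SUP s\<in>{0..1}. \<bar>a s\<bar>) = 1 \<and>
     (\<forall>s\<in>{0..1-\<delta>}. a s \<ge> a0) \<and>
     (\<forall>s\<in>{1-\<delta><..1}. \<bar>a s - sqrt (1 - s\<^sup>2)\<bar> \<le> C0 * eps\<^sup>2 * sqrt (1 - s\<^sup>2))"

definition sq_int01 :: "(real \<Rightarrow> real) \<Rightarrow> bool" where
  "sq_int01 f \<longleftrightarrow> f \<in> borel_measurable lborel \<and>
      set_integrable lborel {0<..<1} (\<lambda>s. (f s)\<^sup>2)"

definition L2norm01 :: "(real \<Rightarrow> real) \<Rightarrow> real" where
  "L2norm01 f = sqrt (LINT s:{0<..<1}|lborel. (f s)\<^sup>2)"

text \<open>g is the (weak) derivative of u on [0,1): u is the continuous
  (locally absolutely continuous) representative, u(s) = u(0) + int_0^s g.\<close>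
definition weak_deriv01 :: "(real \<Rightarrow> real) \<Rightarrow> (real \<Rightarrow> real) \<Rightarrow> bool" where
  "weak_deriv01 u g \<longleftrightarrow>
     (\<forall>s\<in>{0..<1}. set_integrable lborel {0..s} g \<and>
                   u s = u 0 + (LINT t:{0..s}|lborel. g t))"

definition in_Ha :: "(real \<Rightarrow> real) \<Rightarrow> (real \<Rightarrow> real) \<Rightarrow> (real \<Rightarrow> real) \<Rightarrow> bool" where
  "in_Ha a u g \<longleftrightarrow> sq_int01 u \<and> weak_deriv01 u g \<and> sq_int01 (\<lambda>s. (a s)\<^sup>2 * g s)"

definition in_Ha0 :: "(real \<Rightarrow> real) \<Rightarrow> (real \<Rightarrow> real) \<Rightarrow> (real \<Rightarrow> real) \<Rightarrow> bool" where
  "in_Ha0 a u g \<longleftrightarrow> in_Ha a u g \<and> u 0 = 0"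

end

theory Submission
  imports Defs "HOL-Real_Asymp.Real_Asymp"
begin


lemma int1:
  fixes t :: real assumes "t \<le> 1"
  shows "(\<integral>\<^sup>+ s. ennreal (1 / sqrt (1 - s)) * indicator {t..1} s \<partial>lborel) = ennreal (2 * sqrt (1 - t))"
proof -
  have "((\<lambda>s. 1 / sqrt (1 - s)) has_integral ((\<lambda>s. - 2 * sqrt (1 - s)) 1 - (\<lambda>s. - 2 * sqrt (1 - s)) t)) {t..1}"
  proof (rule fundamental_theorem_of_calculus_interior)
    show "t \<le> 1" by fact
    show "continuous_on {t..1} (\<lambda>s. - 2 * sqrt (1 - s))"
      by (intro continuous_intros)
    fix x assume x: "x \<in> {t<..<1}"
    show "((\<lambda>s. - 2 * sqrt (1 - s)) has_vector_derivative 1 / sqrt (1 - x)) (at x)"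
      unfolding has_real_derivative_iff_has_vector_derivative[symmetric]
      using x by (auto intro!: derivative_eq_intros simp: field_simps)
  qed
  then have "((\<lambda>s. 1 / sqrt (1 - s)) has_integral (2 * sqrt (1 - t))) {t..1}" by simp
  from nn_integral_has_integral_lebesgue'[OF _ this] show ?thesis
    by simp
qed

lemma int2:
  fixes s :: real assumes "0 \<le> s" "s < 1"
  shows "(\<integral>\<^sup>+ t. ennreal (1 / ((1 - t) * sqrt (1 - t))) * indicator {0..s} t \<partial>lborel) = ennreal (2 / sqrt (1 - s) - 2)"
proof -
  have "((\<lambda>t. 1 / ((1 - t) * sqrt (1 - t))) has_integral ((\<lambda>t. 2 / sqrt (1 - t)) s - (\<lambda>t. 2 / sqrt (1 - t)) 0)) {0..s}"
  proof (rule fundamental_theorem_of_calculus_interior)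
    show "0 \<le> s" by fact
    show "continuous_on {0..s} (\<lambda>t. 2 / sqrt (1 - t))"
      using assms by (intro continuous_intros) auto
    fix x assume x: "x \<in> {0<..<s}"
    then have "1 - x > 0" using assms by auto
    then show "((\<lambda>t. 2 / sqrt (1 - t)) has_vector_derivative 1 / ((1 - x) * sqrt (1 - x))) (at x)"
      unfolding has_real_derivative_iff_has_vector_derivative[symmetric]
      by (auto intro!: derivative_eq_intros simp: field_simps power2_eq_square)
  qed
  then have "((\<lambda>t. 1 / ((1 - t) * sqrt (1 - t))) has_integral (2 / sqrt (1 - s) - 2)) {0..s}" by simp
  from nn_integral_has_integral_lebesgue'[OF _ this] show ?thesis
    using assms by simp
qed



lemma meas_g0:
  fixes g :: "real \<Rightarrow> real"
  assumes "\<And>s. s \<in> {0..<1} \<Longrightarrow> set_integrable lborel {0..s} g"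
  shows "(\<lambda>t. g t * indicator {0..<1} t) \<in> borel_measurable lborel"
proof (rule borel_measurable_LIMSEQ_real)
  let ?b = "\<lambda>i::nat. 1 - 1 / (real i + 2)"
  show "(\<lambda>t. indicator {0..?b i} t * g t) \<in> borel_measurable lborel" for i
  proof -
    have "?b i \<in> {0..<1}" by (auto simp: field_simps)
    from assms[OF this] have "integrable lborel (\<lambda>t. indicator {0..?b i} t *\<^sub>R g t)"
      unfolding set_integrable_def .
    then show ?thesis by (simp add: borel_measurable_integrable)
  qed
  fix x :: real
  show "(\<lambda>i. indicator {0..?b i} x * g x) \<longlonglongrightarrow> g x * indicator {0..<1} x"
  proof (cases "0 \<le> x \<and> x < 1")
    case True
    have "(\<lambda>i. 1 / (real i + 2)) \<longlonglongrightarrow> 0"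
      by real_asymp
    then have "eventually (\<lambda>i. 1 / (real i + 2) < 1 - x) sequentially"
      using True by (intro order_tendstoD) auto
    then have "eventually (\<lambda>i. indicator {0..?b i} x * g x = g x * indicator {0..<1} x) sequentially"
      by eventually_elim (use True in auto)
    then show ?thesis by (rule tendsto_eventually)
  next
    case False
    have "indicator {0..?b i} x = (0::real)" for i
    proof -
      have "1 / (real i + 2) > 0" by simp
      then have "\<not> (0 \<le> x \<and> x \<le> ?b i)" using False by linarith
      then show ?thesis by (simp add: indicator_def)
    qed
    then have "(\<lambda>i. indicator {0..?b i} x * g x) = (\<lambda>i. 0)" by simp
    moreover have "g x * indicator {0..<1} x = 0" using False by simp
    ultimately show ?thesis by (metis tendsto_const)
  qed
qed




lemma pointwise:
  fixes g g0 :: "real \<Rightarrow> real" and s :: real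
  assumes s: "0 \<le> s" "s < 1"
    and int: "set_integrable lborel {0..s} g"
    and g0m: "g0 \<in> borel_measurable lborel"
    and g0: "\<And>t. t \<in> {0..<1} \<Longrightarrow> g0 t = g t"
  shows "ennreal ((LINT t:{0..s}|lborel. g t)\<^sup>2) \<le>
     ennreal (2 / sqrt (1 - s)) * (\<integral>\<^sup>+ t. ennreal ((1 - t) * sqrt (1 - t) * (g0 t)\<^sup>2) * indicator {0..s} t \<partial>lborel)"
proof -
  define N where "N = (\<integral>\<^sup>+ t. ennreal \<bar>g0 t\<bar> * indicator {0..s} t \<partial>lborel)"
  define F where "F = (\<lambda>t. ennreal (sqrt (1 / ((1 - t) * sqrt (1 - t)))) * indicator {0..s} t)"
  define G where "G = (\<lambda>t. ennreal (sqrt ((1 - t) * sqrt (1 - t)) * \<bar>g0 t\<bar>) * indicator {0..s} t)"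
  have "norm (LINT t:{0..s}|lborel. g t) \<le> (\<integral>\<^sup>+ t. norm (indicator {0..s} t *\<^sub>R g t) \<partial>lborel)"
    unfolding set_lebesgue_integral_def
    by (rule integral_norm_bound_ennreal) (use int in \<open>simp add: set_integrable_def\<close>)
  also have "\<dots> = N"
    unfolding N_def
    by (intro nn_integral_cong) (use s g0 in \<open>auto simp: indicator_def\<close>)
  finally have uN: "ennreal \<bar>LINT t:{0..s}|lborel. g t\<bar> \<le> N" by simp
  have NFG: "N = (\<integral>\<^sup>+ t. F t * G t \<partial>lborel)"
    unfolding N_def F_def G_def
  proof (intro nn_integral_cong)
    fix t :: real
    show "ennreal \<bar>g0 t\<bar> * indicator {0..s} t =
      ennreal (sqrt (1 / ((1 - t) * sqrt (1 - t)))) * indicator {0..s} t *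
      (ennreal (sqrt ((1 - t) * sqrt (1 - t)) * \<bar>g0 t\<bar>) * indicator {0..s} t)"
    proof (cases "t \<in> {0..s}")
      case True
      then have p: "(1 - t) * sqrt (1 - t) > 0" using s by auto
      have e: "sqrt (1 / ((1 - t) * sqrt (1 - t))) * (sqrt ((1 - t) * sqrt (1 - t)) * \<bar>g0 t\<bar>) = \<bar>g0 t\<bar>"
        using p True s by (simp add: real_sqrt_divide real_sqrt_mult[symmetric])
      have m: "ennreal (sqrt (1 / ((1 - t) * sqrt (1 - t))) * (sqrt ((1 - t) * sqrt (1 - t)) * \<bar>g0 t\<bar>)) = ennreal (sqrt (1 / ((1 - t) * sqrt (1 - t)))) * ennreal (sqrt ((1 - t) * sqrt (1 - t)) * \<bar>g0 t\<bar>)"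
        by (rule ennreal_mult) (use p in auto)
      have "ennreal \<bar>g0 t\<bar> = ennreal (sqrt (1 / ((1 - t) * sqrt (1 - t)))) * ennreal (sqrt ((1 - t) * sqrt (1 - t)) * \<bar>g0 t\<bar>)"
        using m by (simp only: e)
      then show ?thesis using True by simp
    qed simp
  qed
  have CS: "N\<^sup>2 \<le> (\<integral>\<^sup>+ t. F t ^ 2 \<partial>lborel) * (\<integral>\<^sup>+ t. G t ^ 2 \<partial>lborel)"
    unfolding NFG F_def G_def using g0m
    by (intro Cauchy_Schwarz_nn_integral) (simp_all add: measurable_lborel1)
  have F2: "(\<integral>\<^sup>+ t. F t ^ 2 \<partial>lborel) = ennreal (2 / sqrt (1 - s) - 2)"
  proof -
    have "(\<integral>\<^sup>+ t. F t ^ 2 \<partial>lborel) = (\<integral>\<^sup>+ t. ennreal (1 / ((1 - t) * sqrt (1 - t))) * indicator {0..s} t \<partial>lborel)"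
      unfolding F_def
    proof (intro nn_integral_cong)
      fix t :: real
      show "(ennreal (sqrt (1 / ((1 - t) * sqrt (1 - t)))) * indicator {0..s} t)\<^sup>2 =
         ennreal (1 / ((1 - t) * sqrt (1 - t))) * indicator {0..s} t"
      proof (cases "t \<in> {0..s}")
        case True
        then have p: "(1 - t) * sqrt (1 - t) > 0" using s by auto
        then show ?thesis using True by (simp add: indicator_def, subst ennreal_power) auto
      qed simp
    qed
    also have "\<dots> = ennreal (2 / sqrt (1 - s) - 2)" by (rule int2[OF s])
    finally show ?thesis .
  qed
  have G2: "(\<integral>\<^sup>+ t. G t ^ 2 \<partial>lborel) = (\<integral>\<^sup>+ t. ennreal ((1 - t) * sqrt (1 - t) * (g0 t)\<^sup>2) * indicator {0..s} t \<partial>lborel)"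
    unfolding G_def
  proof (intro nn_integral_cong)
    fix t :: real
    show "(ennreal (sqrt ((1 - t) * sqrt (1 - t)) * \<bar>g0 t\<bar>) * indicator {0..s} t)\<^sup>2 =
         ennreal ((1 - t) * sqrt (1 - t) * (g0 t)\<^sup>2) * indicator {0..s} t"
    proof (cases "t \<in> {0..s}")
      case True
      then have p: "(1 - t) * sqrt (1 - t) > 0" using s by auto
      then show ?thesis using True by (simp add: indicator_def, subst ennreal_power) (auto simp: power_mult_distrib)
    qed simp
  qed
  have "ennreal ((LINT t:{0..s}|lborel. g t)\<^sup>2) = (ennreal \<bar>LINT t:{0..s}|lborel. g t\<bar>)\<^sup>2"
    by (subst ennreal_power) auto
  also have "\<dots> \<le> N\<^sup>2" using uN by (intro power_mono) auto
  also have "\<dots> \<le> ennreal (2 / sqrt (1 - s) - 2) * (\<integral>\<^sup>+ t. ennreal ((1 - t) * sqrt (1 - t) * (g0 t)\<^sup>2) * indicator {0..s} t \<partial>lborel)"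
    using CS F2 G2 by simp
  also have "\<dots> \<le> ennreal (2 / sqrt (1 - s)) * (\<integral>\<^sup>+ t. ennreal ((1 - t) * sqrt (1 - t) * (g0 t)\<^sup>2) * indicator {0..s} t \<partial>lborel)"
    by (intro mult_right_mono ennreal_leI) auto
  finally show ?thesis .
qed




lemma hardy:
  fixes u g :: "real \<Rightarrow> real"
  assumes wd: "\<And>s. s \<in> {0..<1} \<Longrightarrow> set_integrable lborel {0..s} g \<and> u s = (LINT t:{0..s}|lborel. g t)"
  shows "(\<integral>\<^sup>+ s. ennreal ((u s)\<^sup>2) * indicator {0<..<1} s \<partial>lborel)
     \<le> 4 * (\<integral>\<^sup>+ t. ennreal ((1 - t)\<^sup>2 * (g t)\<^sup>2) * indicator {0<..<1} t \<partial>lborel)"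
proof -
  define g0 where "g0 = (\<lambda>t. g t * indicator {0..<1} t)"
  have g0m: "g0 \<in> borel_measurable lborel"
    unfolding g0_def by (rule meas_g0) (use wd in auto)
  then have g0b[measurable]: "g0 \<in> borel_measurable borel" by simp
  have g0eq: "\<And>t. t \<in> {0..<1} \<Longrightarrow> g0 t = g t" unfolding g0_def by simp
  define K where "K = (\<lambda>s. ennreal (2 / sqrt (1 - s)) * indicator {0<..<1} s)"
  define W where "W = (\<lambda>t. ennreal ((1 - t) * sqrt (1 - t) * (g0 t)\<^sup>2))"
  define D where "D = {p :: real \<times> real. 0 \<le> snd p \<and> snd p \<le> fst p}"
  have Dm[measurable]: "D \<in> sets (borel \<Otimes>\<^sub>M borel)"
  proof -
    have "{p \<in> space (borel \<Otimes>\<^sub>M borel). 0 \<le> snd p \<and> snd p \<le> (fst p :: real)} \<in> sets (borel \<Otimes>\<^sub>M borel)"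
      by measurable
    then show ?thesis unfolding D_def by (simp add: space_pair_measure)
  qed
  have Km[measurable]: "K \<in> borel_measurable borel" unfolding K_def by measurable
  have Wm[measurable]: "W \<in> borel_measurable borel" unfolding W_def by measurable
  have indD: "indicator {0..s} t = (indicator D (s, t) :: ennreal)" for s t
    by (simp add: D_def indicator_def)
  have "(\<integral>\<^sup>+ s. ennreal ((u s)\<^sup>2) * indicator {0<..<1} s \<partial>lborel)
      \<le> (\<integral>\<^sup>+ s. K s * (\<integral>\<^sup>+ t. W t * indicator D (s, t) \<partial>lborel) \<partial>lborel)"
  proof (intro nn_integral_mono)
    fix s :: real
    show "ennreal ((u s)\<^sup>2) * indicator {0<..<1} s \<le> K s * (\<integral>\<^sup>+ t. W t * indicator D (s, t) \<partial>lborel)"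
    proof (cases "s \<in> {0<..<1}")
      case True
      then have s: "0 \<le> s" "s < 1" by auto
      from wd[of s] s have i: "set_integrable lborel {0..s} g" and us: "u s = (LINT t:{0..s}|lborel. g t)" by auto
      have "ennreal ((u s)\<^sup>2) \<le> ennreal (2 / sqrt (1 - s)) * (\<integral>\<^sup>+ t. ennreal ((1 - t) * sqrt (1 - t) * (g0 t)\<^sup>2) * indicator {0..s} t \<partial>lborel)"
        unfolding us by (rule pointwise[OF s i g0m g0eq])
      then show ?thesis using True by (simp add: K_def W_def indD)
    qed (simp add: K_def)
  qed
  also have "\<dots> = (\<integral>\<^sup>+ s. (\<integral>\<^sup>+ t. K s * (W t * indicator D (s, t)) \<partial>lborel) \<partial>lborel)"
    by (intro nn_integral_cong nn_integral_cmult[symmetric]) measurable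
  also have "\<dots> = (\<integral>\<^sup>+ t. (\<integral>\<^sup>+ s. K s * (W t * indicator D (s, t)) \<partial>lborel) \<partial>lborel)"
    by (rule lborel_pair.Fubini'[symmetric]) measurable
  also have "\<dots> = (\<integral>\<^sup>+ t. W t * (\<integral>\<^sup>+ s. K s * indicator D (s, t) \<partial>lborel) \<partial>lborel)"
    by (intro nn_integral_cong) (subst nn_integral_cmult[symmetric], measurable, simp add: ac_simps)
  also have "\<dots> \<le> (\<integral>\<^sup>+ t. 4 * (ennreal ((1 - t)\<^sup>2 * (g t)\<^sup>2) * indicator {0<..<1} t) \<partial>lborel)"
  proof (intro nn_integral_mono_AE eventually_mono[OF AE_lborel_singleton[of 0]])
    fix t :: real assume t0: "t \<noteq> 0"
    show "W t * (\<integral>\<^sup>+ s. K s * indicator D (s, t) \<partial>lborel) \<le> 4 * (ennreal ((1 - t)\<^sup>2 * (g t)\<^sup>2) * indicator {0<..<1} t)"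
    proof (cases "t \<in> {0<..<1}")
      case False
      with t0 have "W t = 0" by (auto simp: W_def g0_def indicator_def)
      then show ?thesis by simp
    next
      case True
      have "(\<integral>\<^sup>+ s. K s * indicator D (s, t) \<partial>lborel) \<le> (\<integral>\<^sup>+ s. 2 * (ennreal (1 / sqrt (1 - s)) * indicator {t..1} s) \<partial>lborel)"
      proof (intro nn_integral_mono)
        fix s :: real
        have e2: "ennreal (2 / sqrt (1 - s)) = 2 * ennreal (1 / sqrt (1 - s))"
        proof (cases "s \<le> 1")
          case True then show ?thesis using numeral_mult_ennreal[of "1 / sqrt (1 - s)" "num.Bit0 num.One"] by simp
        next
          case False
          then have "2 / sqrt (1 - s) < 0" "1 / sqrt (1 - s) < 0" by (auto simp: divide_pos_neg)
          then show ?thesis by (simp add: ennreal_neg)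
        qed
        show "K s * indicator D (s, t) \<le> 2 * (ennreal (1 / sqrt (1 - s)) * indicator {t..1} s)"
          using True by (auto simp: K_def D_def indicator_def e2)
      qed
      also have "\<dots> = 2 * ennreal (2 * sqrt (1 - t))"
        using True by (subst nn_integral_cmult) (auto simp: int1)
      finally have I: "(\<integral>\<^sup>+ s. K s * indicator D (s, t) \<partial>lborel) \<le> ennreal (4 * sqrt (1 - t))"
        using numeral_mult_ennreal[of "2 * sqrt (1 - t)" "num.Bit0 num.One"] True by simp
      have "W t * (\<integral>\<^sup>+ s. K s * indicator D (s, t) \<partial>lborel) \<le> W t * ennreal (4 * sqrt (1 - t))"
        by (intro mult_left_mono I) auto
      also have "\<dots> = ennreal ((1 - t) * sqrt (1 - t) * (g0 t)\<^sup>2 * (4 * sqrt (1 - t)))"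
        unfolding W_def using True by (subst ennreal_mult) auto
      also have "(1 - t) * sqrt (1 - t) * (g0 t)\<^sup>2 * (4 * sqrt (1 - t)) = 4 * ((1 - t)\<^sup>2 * (g t)\<^sup>2)"
      proof -
        have s2: "sqrt (1 - t) * sqrt (1 - t) = 1 - t" using True by (simp flip: power2_eq_square)
        have "sqrt (1 - t) * (4 * sqrt (1 - t)) = 4 * (sqrt (1 - t) * sqrt (1 - t))" by (simp only: mult_ac)
        also have "\<dots> = 4 * (1 - t)" by (simp only: s2)
        finally have s3: "sqrt (1 - t) * (4 * sqrt (1 - t)) = 4 - 4 * t" by simp
        have gt: "g0 t = g t" using True g0eq by auto
        have "(1 - t) * sqrt (1 - t) * (g0 t)\<^sup>2 * (4 * sqrt (1 - t)) = (1 - t) * (g t)\<^sup>2 * (sqrt (1 - t) * (4 * sqrt (1 - t)))"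
          by (simp only: gt mult_ac)
        also have "\<dots> = (1 - t) * (g t)\<^sup>2 * (4 - 4 * t)" by (simp only: s3)
        also have "\<dots> = 4 * ((1 - t)\<^sup>2 * (g t)\<^sup>2)" by (simp add: power2_eq_square algebra_simps)
        finally show ?thesis .
      qed
      finally show ?thesis using True by (simp add: ennreal_mult)
    qed
  qed
  also have "\<dots> = 4 * (\<integral>\<^sup>+ t. ennreal ((1 - t)\<^sup>2 * (g t)\<^sup>2) * indicator {0<..<1} t \<partial>lborel)"
  proof -
    have "(\<integral>\<^sup>+ t. 4 * (ennreal ((1 - t)\<^sup>2 * (g t)\<^sup>2) * indicator {0<..<1} t) \<partial>lborel)
        = (\<integral>\<^sup>+ t. 4 * (ennreal ((1 - t)\<^sup>2 * (g0 t)\<^sup>2) * indicator {0<..<1} t) \<partial>lborel)"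
      by (intro nn_integral_cong) (auto simp: g0eq indicator_def)
    also have "\<dots> = 4 * (\<integral>\<^sup>+ t. ennreal ((1 - t)\<^sup>2 * (g0 t)\<^sup>2) * indicator {0<..<1} t \<partial>lborel)"
      by (rule nn_integral_cmult) measurable
    also have "(\<integral>\<^sup>+ t. ennreal ((1 - t)\<^sup>2 * (g0 t)\<^sup>2) * indicator {0<..<1} t \<partial>lborel)
        = (\<integral>\<^sup>+ t. ennreal ((1 - t)\<^sup>2 * (g t)\<^sup>2) * indicator {0<..<1} t \<partial>lborel)"
      by (intro nn_integral_cong) (auto simp: g0eq indicator_def)
    finally show ?thesis .
  qed
  finally show ?thesis .
qed




lemma nn_set_int:
  fixes f :: "real \<Rightarrow> real"
  assumes "set_integrable lborel A f" "\<And>s. 0 \<le> f s"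
  shows "(\<integral>\<^sup>+ s. ennreal (f s) * indicator A s \<partial>lborel) = ennreal (LINT s:A|lborel. f s)"
proof -
  have "(\<integral>\<^sup>+ s. ennreal (f s) * indicator A s \<partial>lborel) = (\<integral>\<^sup>+ s. ennreal (indicator A s *\<^sub>R f s) \<partial>lborel)"
    by (intro nn_integral_cong) (auto simp: indicator_def)
  also have "\<dots> = ennreal (LINT s:A|lborel. f s)"
    unfolding set_lebesgue_integral_def
    by (rule nn_integral_eq_integral) (use assms in \<open>auto simp: set_integrable_def\<close>)
  finally show ?thesis .
qed

lemma weight_bound:
  assumes adm: "admissible_radius eps \<delta> a0 C0 a"
    and ce: "C0 * eps\<^sup>2 < 1 / 2"
    and s: "0 \<le> s" "s < 1"
  shows "min (a0\<^sup>2) (1 / 4) * (1 - s) \<le> (a s)\<^sup>2"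
proof -
  from adm have a0: "a0 > 0" and lo: "\<forall>s\<in>{0..1-\<delta>}. a s \<ge> a0"
    and near: "\<forall>s\<in>{1-\<delta><..1}. \<bar>a s - sqrt (1 - s\<^sup>2)\<bar> \<le> C0 * eps\<^sup>2 * sqrt (1 - s\<^sup>2)"
    unfolding admissible_radius_def by auto
  show ?thesis
  proof (cases "s \<le> 1 - \<delta>")
    case True
    with lo s have "a s \<ge> a0" by auto
    then have "a0\<^sup>2 \<le> (a s)\<^sup>2" using a0 by (intro power_mono) auto
    moreover have "min (a0\<^sup>2) (1 / 4) * (1 - s) \<le> a0\<^sup>2 * 1"
      using s by (intro mult_mono) auto
    ultimately show ?thesis by simp
  next
    case False
    define r where "r = sqrt (1 - s\<^sup>2)"
    have r0: "r \<ge> 0" unfolding r_def using s by (simp add: power_le_one)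
    from near False s have "\<bar>a s - r\<bar> \<le> C0 * eps\<^sup>2 * r" unfolding r_def by auto
    moreover have "C0 * eps\<^sup>2 * r \<le> r / 2" 
    proof -
      have "C0 * eps\<^sup>2 * r \<le> (1 / 2) * r" using ce r0 by (intro mult_right_mono) auto
      then show ?thesis by simp
    qed
    ultimately have "a s \<ge> r / 2" by linarith
    then have le: "(r / 2)\<^sup>2 \<le> (a s)\<^sup>2" using r0 by (intro power_mono) auto
    have e: "(r / 2)\<^sup>2 = (1 - s\<^sup>2) / 4" unfolding r_def using s
      by (simp add: power_divide power_le_one)
    from le have "(1 - s\<^sup>2) / 4 \<le> (a s)\<^sup>2" unfolding e .
    moreover have "1 - s \<le> 1 - s\<^sup>2" using s mult_left_le_one_le[of s s] by (simp add: power2_eq_square)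
    ultimately have q: "1 / 4 * (1 - s) \<le> (a s)\<^sup>2" by (simp add: field_simps)
    have "min (a0\<^sup>2) (1 / 4) * (1 - s) \<le> 1 / 4 * (1 - s)"
      using s by (intro mult_right_mono) auto
    then show ?thesis using q by linarith
  qed
qed




theorem lemma4p1:
  fixes \<delta> a0 C0 :: real
  shows "\<exists>eps0>0. \<exists>C. \<forall>eps a u g.
           0 < eps \<and> eps < eps0 \<and> admissible_radius eps \<delta> a0 C0 a \<and> in_Ha0 a u g \<longrightarrow>
           L2norm01 u \<le> C * L2norm01 (\<lambda>s. (a s)\<^sup>2 * g s)"
proof -
  define eps0 where "eps0 = 1 / sqrt (2 * (\<bar>C0\<bar> + 1))"
  define c where "c = min (a0\<^sup>2) (1 / 4)"
  have eps0: "eps0 > 0" unfolding eps0_def by (simp add: add_pos_nonneg)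
  show ?thesis
  proof (rule exI[of _ eps0], intro conjI eps0 exI[of _ "2 / c"] allI impI, elim conjE)
    fix eps a u g
    assume e: "0 < eps" "eps < eps0" and adm: "admissible_radius eps \<delta> a0 C0 a" and h: "in_Ha0 a u g"
    from adm have a0: "a0 > 0" unfolding admissible_radius_def by auto
    then have c0: "c > 0" unfolding c_def by simp
    have ce: "C0 * eps\<^sup>2 < 1 / 2"
    proof -
      have "eps\<^sup>2 < eps0\<^sup>2" using e by (intro power_strict_mono) auto
      also have "eps0\<^sup>2 = 1 / (2 * (\<bar>C0\<bar> + 1))"
        unfolding eps0_def by (simp add: power_divide add_pos_nonneg)
      finally have "eps\<^sup>2 * (2 * (\<bar>C0\<bar> + 1)) < 1"
        by (simp add: field_simps add_pos_nonneg)
      then have "2 * (\<bar>C0\<bar> * eps\<^sup>2) < 1 - 2 * eps\<^sup>2" by (simp add: algebra_simps)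
      moreover have "C0 * eps\<^sup>2 \<le> \<bar>C0\<bar> * eps\<^sup>2" by (intro mult_right_mono) auto
      moreover have "eps\<^sup>2 \<ge> 0" by simp
      ultimately show ?thesis by linarith
    qed
    have wb: "\<And>s. 0 \<le> s \<Longrightarrow> s < 1 \<Longrightarrow> c * (1 - s) \<le> (a s)\<^sup>2"
      unfolding c_def by (rule weight_bound[OF adm ce])
    from h have u2: "set_integrable lborel {0<..<1} (\<lambda>s. (u s)\<^sup>2)"
      and w2: "set_integrable lborel {0<..<1} (\<lambda>s. ((a s)\<^sup>2 * g s)\<^sup>2)"
      and wd: "weak_deriv01 u g" and u0: "u 0 = 0"
      unfolding in_Ha0_def in_Ha_def sq_int01_def by auto
    have wd': "\<And>s. s \<in> {0..<1} \<Longrightarrow> set_integrable lborel {0..s} g \<and> u s = (LINT t:{0..s}|lborel. g t)"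
      using wd u0 unfolding weak_deriv01_def by auto
    define X where "X = (LINT s:{0<..<1}|lborel. (u s)\<^sup>2)"
    define Y where "Y = (LINT s:{0<..<1}|lborel. ((a s)\<^sup>2 * g s)\<^sup>2)"
    have Y0: "Y \<ge> 0" unfolding Y_def set_lebesgue_integral_def by (intro integral_nonneg_AE) (auto simp: indicator_def)
    have "ennreal X = (\<integral>\<^sup>+ s. ennreal ((u s)\<^sup>2) * indicator {0<..<1} s \<partial>lborel)"
      unfolding X_def by (rule nn_set_int[symmetric, OF u2]) auto
    also have "\<dots> \<le> 4 * (\<integral>\<^sup>+ t. ennreal ((1 - t)\<^sup>2 * (g t)\<^sup>2) * indicator {0<..<1} t \<partial>lborel)"
      by (rule hardy[OF wd'])
    also have "(\<integral>\<^sup>+ t. ennreal ((1 - t)\<^sup>2 * (g t)\<^sup>2) * indicator {0<..<1} t \<partial>lborel)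
        \<le> (\<integral>\<^sup>+ t. ennreal (1 / c\<^sup>2) * (ennreal (((a t)\<^sup>2 * g t)\<^sup>2) * indicator {0<..<1} t) \<partial>lborel)"
    proof (intro nn_integral_mono)
      fix t :: real
      show "ennreal ((1 - t)\<^sup>2 * (g t)\<^sup>2) * indicator {0<..<1} t
         \<le> ennreal (1 / c\<^sup>2) * (ennreal (((a t)\<^sup>2 * g t)\<^sup>2) * indicator {0<..<1} t)"
      proof (cases "t \<in> {0<..<1}")
        case True
        then have "c * (1 - t) \<le> (a t)\<^sup>2" by (intro wb) auto
        then have "(c * (1 - t))\<^sup>2 \<le> ((a t)\<^sup>2)\<^sup>2" using True c0 by (intro power_mono) auto
        then have "(c * (1 - t))\<^sup>2 * (g t)\<^sup>2 \<le> ((a t)\<^sup>2)\<^sup>2 * (g t)\<^sup>2" by (intro mult_right_mono) auto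
        then have A: "(1 - t)\<^sup>2 * (g t)\<^sup>2 * c\<^sup>2 \<le> ((a t)\<^sup>2 * g t)\<^sup>2"
          by (simp only: power_mult_distrib mult_ac)
        have "(1 - t)\<^sup>2 * (g t)\<^sup>2 \<le> ((a t)\<^sup>2 * g t)\<^sup>2 / c\<^sup>2"
          using A c0 by (subst pos_le_divide_eq) auto
        then have "(1 - t)\<^sup>2 * (g t)\<^sup>2 \<le> 1 / c\<^sup>2 * (((a t)\<^sup>2 * g t)\<^sup>2)" by simp
        then have "ennreal ((1 - t)\<^sup>2 * (g t)\<^sup>2) \<le> ennreal (1 / c\<^sup>2 * (((a t)\<^sup>2 * g t)\<^sup>2))"
          by (rule ennreal_leI)
        also have "\<dots> = ennreal (1 / c\<^sup>2) * ennreal (((a t)\<^sup>2 * g t)\<^sup>2)"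
          by (rule ennreal_mult) auto
        finally show ?thesis using True by simp
      qed simp
    qed
    also have "\<dots> = ennreal (1 / c\<^sup>2) * (\<integral>\<^sup>+ t. ennreal (((a t)\<^sup>2 * g t)\<^sup>2) * indicator {0<..<1} t \<partial>lborel)"
    proof (rule nn_integral_cmult)
      have "integrable lborel (\<lambda>s. indicator {0<..<1} s *\<^sub>R ((a s)\<^sup>2 * g s)\<^sup>2)"
        using w2 unfolding set_integrable_def .
      then have "(\<lambda>s. indicator {0<..<1} s *\<^sub>R ((a s)\<^sup>2 * g s)\<^sup>2) \<in> borel_measurable lborel"
        by (rule borel_measurable_integrable)
      then have m1: "(\<lambda>s. ennreal (indicator {0<..<1} s *\<^sub>R ((a s)\<^sup>2 * g s)\<^sup>2)) \<in> borel_measurable lborel"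
        by measurable
      have eq: "(\<lambda>s. ennreal (indicator {0<..<1} s *\<^sub>R ((a s)\<^sup>2 * g s)\<^sup>2)) = (\<lambda>t. ennreal (((a t)\<^sup>2 * g t)\<^sup>2) * indicator {0<..<1} t)"
        by (auto simp: indicator_def fun_eq_iff)
      show "(\<lambda>t. ennreal (((a t)\<^sup>2 * g t)\<^sup>2) * indicator {0<..<1} t) \<in> borel_measurable lborel"
        using m1 unfolding eq .
    qed
    also have "(\<integral>\<^sup>+ t. ennreal (((a t)\<^sup>2 * g t)\<^sup>2) * indicator {0<..<1} t \<partial>lborel) = ennreal Y"
      unfolding Y_def by (rule nn_set_int[OF w2]) auto
    finally have "ennreal X \<le> 4 * (ennreal (1 / c\<^sup>2) * ennreal Y)" by (simp add: mult_left_mono)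
    also have "\<dots> = ennreal (4 / c\<^sup>2 * Y)"
      using Y0 by (simp add: ennreal_mult[symmetric] numeral_mult_ennreal)
    finally have XY: "X \<le> 4 / c\<^sup>2 * Y"
      using Y0 c0 by (subst (asm) ennreal_le_iff) auto
    have "L2norm01 u = sqrt X" unfolding L2norm01_def X_def ..
    also have "\<dots> \<le> sqrt (4 / c\<^sup>2 * Y)" using XY by simp
    also have "\<dots> = 2 / c * sqrt Y" using c0
      by (simp add: real_sqrt_mult real_sqrt_divide)
    also have "\<dots> = 2 / c * L2norm01 (\<lambda>s. (a s)\<^sup>2 * g s)" unfolding L2norm01_def Y_def ..
    finally have F: "L2norm01 u \<le> 2 / c * L2norm01 (\<lambda>s. (a s)\<^sup>2 * g s)" .
    then show "L2norm01 u \<le> 2 / c * L2norm01 (\<lambda>s. (a s)\<^sup>2 * g s)" .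
  qed
qed


end
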